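(* Let $D=(V,A)$ be a minimally Steiner rooted $k$-arc-connected $3$-regular directed graph with root $r$ and terminal set $S\subseteq V\setminus\{r\}$, and let $C\subseteq A$ be a directed cycle. For each $s\in S$, let $Q_s\subseteq A$ be an inclusionwise minimal set of arcs that is the arc-disjoint union of $k$ directed $r$-$s$ paths. Then (a) $C\subseteq\bigcup_{s\in S}Q_s$, and (b) $C\setminus Q_s\neq\emptyset$ for all $s\in S$.
   Context: Directed graphs are loopless, parallel arcs allowed. $D$ with root $r$ and terminals $S$ is Steiner rooted $k$-arc-connected if for every $s\in S$ there are $k$ pairwise arc-disjoint directed $r$-$s$ paths; it is minimally so if in addition deleting any arc destroys this property. $D$ is $3$-regular (with respect to $k$) if $r$ has in-degree $0$ and out-degree $k$, every terminal has in-degree $k$ and out-degree $0$, and every other vertex has in-degree plus out-degree $3$. *)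

theory Defs
  imports "Graph_Theory.Graph_Theory"
begin

text \<open>Digraphs are Graph_Theory pre_digraphs (arcs are abstract objects, so parallel
arcs are allowed); directed paths are apath, directed cycles are cycle.\<close>

definition arc_disjoint_path_family ::
  "('a,'b) pre_digraph \<Rightarrow> 'a \<Rightarrow> 'a \<Rightarrow> nat \<Rightarrow> 'b list list \<Rightarrow> bool" where
  "arc_disjoint_path_family G r s k P \<longleftrightarrow>
     length P = k \<and> (\<forall>p\<in>set P. pre_digraph.apath G r p s) \<and>
     (\<forall>i<k. \<forall>j<k. i \<noteq> j \<longrightarrow> set (P ! i) \<inter> set (P ! j) = {})"

definition steiner_rooted_k_arc_connected ::
  "('a,'b) pre_digraph \<Rightarrow> 'a \<Rightarrow> 'a set \<Rightarrow> nat \<Rightarrow> bool" where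
  "steiner_rooted_k_arc_connected G r S k \<longleftrightarrow>
     (\<forall>s\<in>S. \<exists>P. arc_disjoint_path_family G r s k P)"

definition minimally_steiner_rooted_k_arc_connected ::
  "('a,'b) pre_digraph \<Rightarrow> 'a \<Rightarrow> 'a set \<Rightarrow> nat \<Rightarrow> bool" where
  "minimally_steiner_rooted_k_arc_connected G r S k \<longleftrightarrow>
     steiner_rooted_k_arc_connected G r S k \<and>
     (\<forall>a\<in>arcs G. \<not> steiner_rooted_k_arc_connected (pre_digraph.del_arc G a) r S k)"

definition three_regular :: "('a,'b) pre_digraph \<Rightarrow> 'a \<Rightarrow> 'a set \<Rightarrow> nat \<Rightarrow> bool" where
  "three_regular G r S k \<longleftrightarrow>
     in_degree G r = 0 \<and> out_degree G r = k \<and>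
     (\<forall>s\<in>S. in_degree G s = k \<and> out_degree G s = 0) \<and>
     (\<forall>v\<in>verts G - ({r} \<union> S). in_degree G v + out_degree G v = 3)"

definition is_arc_disjoint_path_union ::
  "('a,'b) pre_digraph \<Rightarrow> 'a \<Rightarrow> 'a \<Rightarrow> nat \<Rightarrow> 'b set \<Rightarrow> bool" where
  "is_arc_disjoint_path_union G r s k Q \<longleftrightarrow>
     (\<exists>P. arc_disjoint_path_family G r s k P \<and> Q = (\<Union>p\<in>set P. set p))"

definition minimal_arc_disjoint_path_union ::
  "('a,'b) pre_digraph \<Rightarrow> 'a \<Rightarrow> 'a \<Rightarrow> nat \<Rightarrow> 'b set \<Rightarrow> bool" where
  "minimal_arc_disjoint_path_union G r s k Q \<longleftrightarrow>
     is_arc_disjoint_path_union G r s k Q \<and>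
     (\<forall>Q'. Q' \<subset> Q \<longrightarrow> \<not> is_arc_disjoint_path_union G r s k Q')"

end

theory Submission
  imports Defs
begin

context pre_digraph
begin

lemma cas_head_first: "cas u p v \<Longrightarrow> p \<noteq> [] \<Longrightarrow> tail G (hd p) = u"
  by (cases p) auto

lemma cas_head_last: "cas u p v \<Longrightarrow> p \<noteq> [] \<Longrightarrow> head G (last p) = v"
proof (induct p arbitrary: u)
  case Nil then show ?case by simp
next
  case (Cons a p) then show ?case by (cases p) auto
qed

lemma cas_heads_sub: "cas u p v \<Longrightarrow> head G ` set p \<subseteq> tail G ` set p \<union> {v}"
proof (induct p arbitrary: u)
  case Nil then show ?case by simp
next
  case (Cons a p)
  then have "cas (head G a) p v" by simp
  then have "head G a \<in> tail G ` set p \<union> {v}" by (cases p) auto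
  then show ?case using Cons by auto
qed

lemma cas_tails_sub: "cas u p v \<Longrightarrow> tail G ` set p \<subseteq> head G ` set p \<union> {u}"
proof (induct p arbitrary: u)
  case Nil then show ?case by simp
next
  case (Cons a p)
  then have "cas (head G a) p v" "tail G a = u" by simp_all
  then show ?case using Cons(1)[of "head G a"] by auto
qed

lemma cas_closed_V:
  "cas u p w \<Longrightarrow> u \<in> V \<Longrightarrow> (\<forall>b\<in>set p. tail G b \<in> V \<longrightarrow> head G b \<in> V) \<Longrightarrow> w \<in> V"
  by (induct p arbitrary: u) auto

lemma apath_tail_inj:
  assumes "apath u p v" "b \<in> set p" "e \<in> set p" "tail G b = tail G e"
  shows "b = e"
proof -
  have "distinct (awalk_verts u p)" using assms(1) by (simp add: apath_def)
  moreover have "p \<noteq> []" using assms(2) by auto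
  ultimately have "distinct (map (tail G) p)"
    by (simp add: awalk_verts_conv)
  then have "inj_on (tail G) (set p)" by (simp add: distinct_map)
  then show ?thesis using assms(2-4) by (simp add: inj_on_def)
qed

lemma cycle_heads_tails:
  assumes "cycle c" shows "head G ` set c = tail G ` set c"
proof -
  obtain u where u: "awalk u c u" "c \<noteq> []" using assms unfolding cycle_def by blast
  then have cs: "cas u c u" by (simp add: awalk_def)
  have "tail G (hd c) = u" using cas_head_first[OF cs u(2)] .
  then have uT: "u \<in> tail G ` set c" using u(2) by (metis hd_in_set image_eqI)
  have "head G (last c) = u" using cas_head_last[OF cs u(2)] .
  then have uH: "u \<in> head G ` set c" using u(2) by (metis last_in_set image_eqI)
  have h1: "head G ` set c \<subseteq> tail G ` set c \<union> {u}" using cas_heads_sub[OF cs] .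
  have h2: "tail G ` set c \<subseteq> head G ` set c \<union> {u}" using cas_tails_sub[OF cs] .
  show ?thesis
  proof (rule equalityI)
    show "head G ` set c \<subseteq> tail G ` set c" using h1 uT by auto
    show "tail G ` set c \<subseteq> head G ` set c" using h2 uH by auto
  qed
qed

end

lemma apath_del_arc:
  assumes "pre_digraph.apath G u p v" "e \<notin> set p"
  shows "pre_digraph.apath (pre_digraph.del_arc G e) u p v"
proof -
  have c: "pre_digraph.cas (pre_digraph.del_arc G e) u q w = pre_digraph.cas G u q w" for q u w
    by (induct q arbitrary: u) (simp_all add: pre_digraph.cas.simps pre_digraph.del_arc_simps)
  have a: "pre_digraph.awalk_verts (pre_digraph.del_arc G e) u q = pre_digraph.awalk_verts G u q" for q u
    by (simp add: pre_digraph.awalk_verts_conv pre_digraph.del_arc_simps)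
  have "u \<in> verts G" "set p \<subseteq> arcs G" "pre_digraph.cas G u p v"
    "distinct (pre_digraph.awalk_verts G u p)"
    using assms(1) by (simp_all add: pre_digraph.apath_def pre_digraph.awalk_def)
  then show ?thesis using assms(2)
    unfolding pre_digraph.apath_def pre_digraph.awalk_def c a pre_digraph.del_arc_simps
    by blast
qed


lemma degree_ge2:
  assumes "finite A" "x \<in> A" "y \<in> A" "x \<noteq> y" shows "2 \<le> card A"
proof -
  have "card {x,y} \<le> card A" using assms by (intro card_mono) auto
  then show ?thesis using assms(4) by simp
qed

theorem lemma2p8:
  fixes G :: "('a,'b) pre_digraph" and r :: 'a and S :: "'a set" and k :: nat
    and c :: "'b list" and Q :: "'a \<Rightarrow> 'b set"
  assumes "fin_digraph G" and "loopfree_digraph G"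
    and "r \<in> verts G" and "S \<subseteq> verts G - {r}"
    and "minimally_steiner_rooted_k_arc_connected G r S k"
    and "three_regular G r S k"
    and "pre_digraph.cycle G c"
    and "\<forall>s\<in>S. minimal_arc_disjoint_path_union G r s k (Q s)"
  shows "set c \<subseteq> (\<Union>s\<in>S. Q s) \<and> (\<forall>s\<in>S. set c - Q s \<noteq> {})"
proof -
  interpret fin_digraph G by fact
  obtain u where cu: "awalk u c u" "c \<noteq> []" using assms(7) by (auto simp: cycle_def)
  have carcs: "set c \<subseteq> arcs G" using cu by (simp add: awalk_def)
  have HT: "head G ` set c = tail G ` set c" using cycle_heads_tails[OF assms(7)] .
  have fin: "finite (arcs G)" by simp
  have QP: "\<exists>P. arc_disjoint_path_family G r s k P \<and> Q s = (\<Union>p\<in>set P. set p)" if "s \<in> S" for s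
    using assms(8) that by (auto simp: minimal_arc_disjoint_path_union_def is_arc_disjoint_path_union_def)
  have partA: "set c \<subseteq> (\<Union>s\<in>S. Q s)"
  proof
    fix e assume e: "e \<in> set c"
    then have "e \<in> arcs G" using carcs by auto
    then have "\<not> steiner_rooted_k_arc_connected (del_arc e) r S k"
      using assms(5) by (simp add: minimally_steiner_rooted_k_arc_connected_def)
    then obtain s where s: "s \<in> S" and nP: "\<forall>P. \<not> arc_disjoint_path_family (del_arc e) r s k P"
      by (auto simp: steiner_rooted_k_arc_connected_def)
    obtain P where P: "arc_disjoint_path_family G r s k P" "Q s = (\<Union>p\<in>set P. set p)"
      using QP[OF s] by blast
    show "e \<in> (\<Union>s\<in>S. Q s)"
    proof (rule ccontr)
      assume "e \<notin> (\<Union>s\<in>S. Q s)"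
      then have "e \<notin> Q s" using s by auto
      then have "\<forall>p\<in>set P. e \<notin> set p" using P(2) by auto
      then have "arc_disjoint_path_family (del_arc e) r s k P"
        using P(1) by (auto simp: arc_disjoint_path_family_def intro!: apath_del_arc)
      then show False using nP by blast
    qed
  qed
  have partB: "set c - Q s \<noteq> {}" if s: "s \<in> S" for s
  proof
    assume "set c - Q s = {}"
    then have cQ: "set c \<subseteq> Q s" by auto
    obtain P where P: "arc_disjoint_path_family G r s k P" "Q s = (\<Union>p\<in>set P. set p)"
      using QP[OF s] by blast
    have Pap: "apath r p s" if "p \<in> set P" for p
      using P(1) that by (simp add: arc_disjoint_path_family_def)
    have Pcas: "cas r p s" if "p \<in> set P" for p
      using Pap[OF that] by (simp add: apath_def awalk_def)
    have Parcs: "set p \<subseteq> arcs G" if "p \<in> set P" for p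
      using Pap[OF that] by (simp add: apath_def awalk_def)
    have Pdisj: "set p \<inter> set q = {}" if pq: "p \<in> set P" "q \<in> set P" "p \<noteq> q" for p q
    proof -
      obtain i where i: "i < length P" "P ! i = p" using pq(1) by (auto simp: in_set_conv_nth)
      obtain j where j: "j < length P" "P ! j = q" using pq(2) by (auto simp: in_set_conv_nth)
      have "i \<noteq> j" using i j pq(3) by auto
      then show ?thesis using P(1) i j unfolding arc_disjoint_path_family_def by blast
    qed
    have key: "b \<in> set c" if b: "b \<in> Q s" "tail G b \<in> tail G ` set c" for b
    proof (rule ccontr)
      assume bn: "b \<notin> set c"
      define v where "v = tail G b"
      obtain e' where e': "e' \<in> set c" "tail G e' = v" using b(2) v_def by auto
      have be: "b \<noteq> e'" using bn e' by auto
      obtain p1 where p1: "p1 \<in> set P" "b \<in> set p1" using b(1) P(2) by auto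
      obtain p2 where p2: "p2 \<in> set P" "e' \<in> set p2" using e' cQ P(2) by auto
      have barc: "b \<in> arcs G" using p1 Parcs by auto
      have earc: "e' \<in> arcs G" using e' carcs by auto
      obtain a where a: "a \<in> set c" "head G a = v" using e' HT by (metis imageE imageI)
      have "in_degree G r = 0" using assms(6) by (simp add: three_regular_def)
      then have "in_arcs G r = {}" by (simp add: in_degree_def finite_in_arcs)
      moreover have "a \<in> in_arcs G v" using a carcs by auto
      ultimately have vr: "v \<noteq> r" by auto
      have vS: "v \<notin> S"
      proof
        assume "v \<in> S"
        then have "out_degree G v = 0" using assms(6) by (simp add: three_regular_def)
        then have "out_arcs G v = {}" by (simp add: out_degree_def finite_out_arcs)
        moreover have "e' \<in> out_arcs G v" using e' earc by auto
        ultimately show False by auto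
      qed
      have vV: "v \<in> verts G" using barc v_def by auto
      have deg3: "in_degree G v + out_degree G v = 3"
        using assms(6) vr vS vV by (simp add: three_regular_def)
      obtain f1 where f1: "f1 \<in> set p1" "head G f1 = v"
        using cas_tails_sub[OF Pcas[OF p1(1)]] p1(2) vr v_def by force
      obtain f2 where f2: "f2 \<in> set p2" "head G f2 = v"
        using cas_tails_sub[OF Pcas[OF p2(1)]] p2(2) vr e'(2) by force
      have "p1 \<noteq> p2"
      proof
        assume "p1 = p2"
        then have "b = e'" using apath_tail_inj[OF Pap[OF p1(1)] p1(2)] p2(2) e'(2) v_def by simp
        then show False using be by simp
      qed
      then have "f1 \<noteq> f2" using Pdisj[OF p1(1) p2(1)] f1 f2 by auto
      moreover have "f1 \<in> in_arcs G v" "f2 \<in> in_arcs G v"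
        using f1 f2 p1 p2 Parcs by auto
      ultimately have "2 \<le> in_degree G v" unfolding in_degree_def
        by (intro degree_ge2[of _ f1 f2]) (auto simp: in_arcs_def)
      moreover have "b \<in> out_arcs G v" "e' \<in> out_arcs G v" using barc earc e' v_def by auto
      then have "2 \<le> out_degree G v" unfolding out_degree_def
        using be by (intro degree_ge2[of _ b e']) (auto simp: out_arcs_def)
      ultimately show False using deg3 by simp
    qed
    define e0 where "e0 = hd c"
    have e0: "e0 \<in> set c" using cu(2) e0_def by simp
    then obtain p where p: "p \<in> set P" "e0 \<in> set p" using cQ P(2) by auto
    then obtain xs ys where xy: "p = xs @ e0 # ys" by (meson split_list)
    have "cas r (xs @ e0 # ys) s" using Pcas[OF p(1)] xy by simp
    then have cys: "cas (head G e0) ys s" by simp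
    have "s \<in> tail G ` set c"
    proof (rule cas_closed_V[OF cys])
      show "head G e0 \<in> tail G ` set c" using e0 HT by blast
      show "\<forall>b\<in>set ys. tail G b \<in> tail G ` set c \<longrightarrow> head G b \<in> tail G ` set c"
      proof (intro ballI impI)
        fix b assume "b \<in> set ys" "tail G b \<in> tail G ` set c"
        moreover have "b \<in> Q s" using \<open>b \<in> set ys\<close> xy p(1) P(2) by (metis UN_iff Un_iff set_append list.set_intros(2))
        ultimately have "b \<in> set c" using key by blast
        then show "head G b \<in> tail G ` set c" using HT by blast
      qed
    qed
    then obtain a where a: "a \<in> set c" "tail G a = s" by auto
    have "out_degree G s = 0" using assms(6) s by (simp add: three_regular_def)
    then have "out_arcs G s = {}" by (simp add: out_degree_def finite_out_arcs)
    moreover have "a \<in> out_arcs G s" using a carcs by auto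
    ultimately show False by auto
  qed
  show ?thesis using partA partB by blast
qed

end
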